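(* For every integer $d \geq 1$ there exist a strictly increasing sequence $(a_n)_{n\geq1}$ of positive integers and a constant $c > 0$ such that $$\frac{a_{n+1}}{a_n} > 1 + \frac{c}{a_n^{1/d}} \qquad \text{for all } n \in \mathbb{N},$$ and such that for almost all $\alpha \in \mathbb{R}$ the discrepancy $D_N$ of $(\{a_n\alpha\})_{n\geq1}$ satisfies $N D_N = O\big((\log N)^{2+\varepsilon}\big)$ as $N\to\infty$, for every $\varepsilon > 0$.
   Context: For real $x$, $\{x\}$ denotes the fractional part of $x$. For a sequence $(x_n)_{n\ge1}$ in $[0,1)$, its discrepancy is $$D_N = \sup_{0 \leq a < b \leq 1} \left| \frac{A_N([a,b))}{N} - (b-a) \right|, \qquad A_N([a,b)) = \#\{1 \leq n \leq N : x_n \in [a,b)\}.$$ *)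

theory Defs
  imports "HOL-Analysis.Analysis" "HOL-Library.Landau_Symbols"
begin

definition discrepancy :: "(nat \<Rightarrow> real) \<Rightarrow> nat \<Rightarrow> real" where
  "discrepancy x N =
     (SUP ab \<in> {(a, b). 0 \<le> a \<and> a < b \<and> b \<le> (1::real)}.
        \<bar>real (card {n \<in> {1..N}. x n \<in> {fst ab..<snd ab}}) / real N - (snd ab - fst ab)\<bar>)"

end

theory Submission
  imports Defs "HOL-Analysis.Kronecker_Approximation_Theorem" "HOL-Analysis.Harmonic_Numbers" "HOL-Real_Asymp.Real_Asymp"
begin


definition cntx :: "(nat \<Rightarrow> real) \<Rightarrow> nat \<Rightarrow> nat \<Rightarrow> real \<Rightarrow> real \<Rightarrow> nat" where
  "cntx x m L a b = card {n \<in> {m<..m+L}. x n \<in> {a..<b}}"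

definition errx :: "(nat \<Rightarrow> real) \<Rightarrow> nat \<Rightarrow> nat \<Rightarrow> real \<Rightarrow> real \<Rightarrow> real" where
  "errx x m L a b = real (cntx x m L a b) - real L * (b - a)"

definition kron :: "real \<Rightarrow> nat \<Rightarrow> real" where
  "kron \<beta> n = frac (real n * \<beta>)"

lemma card_int_interval_bounds:
  fixes X Y :: real
  shows "real (card {\<lceil>Y\<rceil>..<\<lceil>X\<rceil>}) \<le> max 0 (X - Y + 1)"
    and "real (card {\<lceil>Y\<rceil>..<\<lceil>X\<rceil>}) \<ge> X - Y - 1"
proof -
  have c: "card {\<lceil>Y\<rceil>..<\<lceil>X\<rceil>} = nat (\<lceil>X\<rceil> - \<lceil>Y\<rceil>)" by simp
  have "real_of_int (\<lceil>X\<rceil> - \<lceil>Y\<rceil>) \<le> X - Y + 1"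
    using ceiling_less_cancel[of X] le_of_int_ceiling[of X] le_of_int_ceiling[of Y] ceiling_correct[of X] ceiling_correct[of Y] by linarith
  then show "real (card {\<lceil>Y\<rceil>..<\<lceil>X\<rceil>}) \<le> max 0 (X - Y + 1)" unfolding c by (cases "\<lceil>X\<rceil> - \<lceil>Y\<rceil> \<ge> 0") auto
  have "real_of_int (\<lceil>X\<rceil> - \<lceil>Y\<rceil>) \<ge> X - Y - 1"
    using le_of_int_ceiling[of X] le_of_int_ceiling[of Y] ceiling_correct[of X] ceiling_correct[of Y] by linarith
  then show "real (card {\<lceil>Y\<rceil>..<\<lceil>X\<rceil>}) \<ge> X - Y - 1" unfolding c by (cases "\<lceil>X\<rceil> - \<lceil>Y\<rceil> \<ge> 0") auto
qed

lemma block: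
  fixes p :: int and q m :: nat
  assumes q: "q > 0" and cop: "coprime p (int q)" and appr: "\<bar>real q * \<beta> - p\<bar> \<le> 1 / q"
    and ab: "0 \<le> a" "a \<le> b" "b \<le> 1"
  shows "\<bar>errx (kron \<beta>) m q a b\<bar> \<le> 3"
proof -
  define \<delta> where "\<delta> = \<beta> - p / q"
  define c0 where "c0 = real (m+1) * \<delta>"
  define u where "u n = int n * p - \<lfloor>real n * \<beta>\<rfloor> * int q" for n
  define S where "S = {n \<in> {m<..m+q}. kron \<beta> n \<in> {a..<b}}"
  have qr: "real q > 0" using q by simp
  have hd: "\<bar>\<delta>\<bar> \<le> 1 / (real q * real q)"
  proof -
    have "\<delta> = (real q * \<beta> - p) / q" unfolding \<delta>_def using qr by (simp add: field_simps)
    then have "\<bar>\<delta>\<bar> = \<bar>real q * \<beta> - p\<bar> / q" by simp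
    also have "\<dots> \<le> (1 / q) / q" using appr qr by (intro divide_right_mono) auto
    finally show ?thesis by simp
  qed
  have close: "\<bar>real n * \<delta> - c0\<bar> \<le> 1 / q" if "n \<in> {m<..m+q}" for n
  proof -
    have "real n * \<delta> - c0 = (real n - real (m+1)) * \<delta>" unfolding c0_def by (simp add: algebra_simps)
    moreover have "\<bar>real n - real (m+1)\<bar> \<le> real q" using that by auto
    ultimately have "\<bar>real n * \<delta> - c0\<bar> \<le> real q * (1 / (real q * real q))"
      using hd by (simp only: abs_mult) (rule mult_mono, auto)
    also have "\<dots> = 1 / q" using qr by (simp add: field_simps)
    finally show ?thesis .
  qed
  have fr: "kron \<beta> n = u n / q + real n * \<delta>" for n
  proof -
    have "kron \<beta> n = real n * \<beta> - \<lfloor>real n * \<beta>\<rfloor>" unfolding kron_def frac_def by simp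
    moreover have "u n / q = real n * p / q - \<lfloor>real n * \<beta>\<rfloor>" unfolding u_def using qr by (simp add: field_simps)
    ultimately show ?thesis unfolding \<delta>_def by (simp add: algebra_simps)
  qed
  have inj: "inj_on u {m<..m+q}"
  proof (rule inj_onI)
    fix n n' assume n: "n \<in> {m<..m+q}" and n': "n' \<in> {m<..m+q}" and e: "u n = u n'"
    have "(int n - int n') * p = (\<lfloor>real n * \<beta>\<rfloor> - \<lfloor>real n' * \<beta>\<rfloor>) * int q"
      using e unfolding u_def by (simp add: algebra_simps)
    then have "int q dvd (int n - int n') * p" by (metis dvd_triv_right)
    then have d: "int q dvd (int n - int n')" using cop
      by (metis coprime_commute coprime_dvd_mult_left_iff)
    show "n = n'"
    proof (rule ccontr)
      assume "n \<noteq> n'"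
      then have "\<bar>int q\<bar> \<le> \<bar>int n - int n'\<bar>" using dvd_imp_le_int[OF _ d] by simp
      moreover have "\<bar>int n - int n'\<bar> < int q" using n n' by auto
      ultimately show False by simp
    qed
  qed
  have cS: "card S = card (u ` S)"
    by (rule card_image[symmetric]) (rule inj_on_subset[OF inj], auto simp: S_def)
  have up: "u ` S \<subseteq> {\<lceil>q*(a - c0) - 1\<rceil> ..< \<lceil>q*(b - c0) + 1\<rceil>}"
  proof
    fix v assume "v \<in> u ` S"
    then obtain n where n: "n \<in> S" and v: "v = u n" by auto
    have nw: "n \<in> {m<..m+q}" and k: "a \<le> kron \<beta> n" "kron \<beta> n < b" using n by (auto simp: S_def)
    have cl: "\<bar>real n * \<delta> - c0\<bar> \<le> 1 / q" using close[OF nw] .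
    have "a - c0 - 1/q \<le> v / q" "v / q < b - c0 + 1 / q" using k cl fr[of n] v by (auto simp: abs_le_iff)
    then have "(a - c0 - 1/q) * q \<le> v" "v < (b - c0 + 1/q) * q" using qr
      by (auto simp: pos_le_divide_eq pos_divide_less_eq)
    then have "q*(a - c0) - 1 \<le> v" "v < q*(b - c0) + 1" using qr by (auto simp: algebra_simps)
    then show "v \<in> {\<lceil>q*(a - c0) - 1\<rceil> ..< \<lceil>q*(b - c0) + 1\<rceil>}"
      by (simp only: atLeastLessThan_iff ceiling_le_iff less_ceiling_iff; linarith)
  qed
  have lo: "{\<lceil>q*(a - c0) + 1\<rceil> ..< \<lceil>q*(b - c0) - 1\<rceil>} \<subseteq> u ` S"
  proof
    fix v assume "v \<in> {\<lceil>q*(a - c0) + 1\<rceil> ..< \<lceil>q*(b - c0) - 1\<rceil>}"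
    then have "q*(a - c0) + 1 \<le> v \<and> v < q*(b - c0) - 1" 
      by (simp only: atLeastLessThan_iff ceiling_le_iff less_ceiling_iff; linarith)
    then have "q*(a - c0) + 1 \<le> v" "v < q*(b - c0) - 1" by auto
    then have "(a - c0 + 1/q) * q \<le> v" "v < (b - c0 - 1/q) * q" using qr by (auto simp: algebra_simps)
    then have "a - c0 + 1/q \<le> v/q" "v/q < b - c0 - 1/q" using qr
      by (auto simp: pos_le_divide_eq pos_divide_less_eq)
    then have v1: "a + 1/q \<le> v/q + c0" "v/q + c0 < b - 1/q" by auto
    obtain x y where xy: "x * p + y * int q = 1"
      using cop by (metis bezout_int coprime_imp_gcd_eq_1)
    define r where "r = (v * x - int (m+1)) mod int q"
    have r0: "0 \<le> r" "r < int q" using q unfolding r_def by auto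
    define n where "n = m + 1 + nat r"
    have nw: "n \<in> {m<..m+q}" using r0 unfolding n_def by auto
    have "int n = int (m+1) + r" using r0 unfolding n_def by simp
    define w where "w = (v * x - int (m+1)) div int q"
    have "v * x - int (m+1) - r = int q * w" unfolding r_def w_def by (rule minus_mod_eq_mult_div)
    then have nw2: "int n - v * x = - (int q * w)" using \<open>int n = int (m+1) + r\<close> by simp
    define k where "k = - w * p - v * y"
    have k: "int n * p - v = int q * k"
    proof -
      have "int n * p - v = (int n - v * x) * p + v * (x * p - 1)" by (simp add: algebra_simps)
      also have "x * p - 1 = - y * int q" using xy by simp
      finally show ?thesis unfolding nw2 k_def by (simp add: algebra_simps)
    qed
    have kr: "real q * real_of_int k = real n * p - v"
    proof -
      have "real_of_int (int n * p - v) = real_of_int (int q * k)" using k by simp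
      then show ?thesis by simp
    qed
    have e: "real n * \<beta> - k = v / q + real n * \<delta>"
    proof -
      have "real_of_int k = (real n * p - v) / q" using kr qr by (simp add: eq_divide_eq mult.commute)
      moreover have "real n * \<beta> = real n * p / q + real n * \<delta>" unfolding \<delta>_def by (simp add: algebra_simps)
      ultimately show ?thesis by (simp add: diff_divide_distrib)
    qed
    have cl: "\<bar>real n * \<delta> - c0\<bar> \<le> 1 / q" using close[OF nw] .
    have rng: "a \<le> real n * \<beta> - k" "real n * \<beta> - k < b" using e v1 cl by (auto simp: abs_le_iff)
    then have fl: "\<lfloor>real n * \<beta>\<rfloor> = k" using ab by (intro floor_unique) auto
    have "kron \<beta> n = real n * \<beta> - k" unfolding kron_def frac_def fl by simp
    then have "n \<in> S" using rng nw unfolding S_def by auto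
    moreover have "u n = v" unfolding u_def fl using k by (simp add: algebra_simps)
    ultimately show "v \<in> u ` S" by force
  qed
  have cU: "real (card S) \<le> q*(b-a) + 3"
  proof -
    have "card S \<le> card {\<lceil>q*(a - c0) - 1\<rceil> ..< \<lceil>q*(b - c0) + 1\<rceil>}"
      unfolding cS by (rule card_mono[OF _ up]) simp
    then have "real (card S) \<le> max 0 (q*(b - c0) + 1 - (q*(a - c0) - 1) + 1)"
      using card_int_interval_bounds(1)[where X="q*(b - c0) + 1" and Y="q*(a - c0) - 1"] of_nat_le_iff by (smt (verit))
    moreover have "q*(b-a) \<ge> 0" using ab by simp
    ultimately show ?thesis by (simp add: algebra_simps)
  qed
  have cL: "real (card S) \<ge> q*(b-a) - 3"
  proof -
    have "card {\<lceil>q*(a - c0) + 1\<rceil> ..< \<lceil>q*(b - c0) - 1\<rceil>} \<le> card S"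
      unfolding cS by (rule card_mono[OF _ lo]) (simp add: S_def)
    then have "real (card S) \<ge> q*(b - c0) - 1 - (q*(a - c0) + 1) - 1"
      using card_int_interval_bounds(2)[where X="q*(b - c0) - 1" and Y="q*(a - c0) + 1"] of_nat_le_iff by (smt (verit))
    then show ?thesis by (simp add: algebra_simps)
  qed
  have "errx (kron \<beta>) m q a b = real (card S) - q*(b-a)"
    unfolding errx_def cntx_def S_def by simp
  then show ?thesis using cU cL by simp
qed



lemma errx_add: "errx x m (L1 + L2) a b = errx x m L1 a b + errx x (m + L1) L2 a b"
proof -
  have u: "{n \<in> {m<..m+(L1+L2)}. x n \<in> {a..<b}} = {n \<in> {m<..m+L1}. x n \<in> {a..<b}} \<union> {n \<in> {m+L1<..m+L1+L2}. x n \<in> {a..<b}}"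
    by auto
  have "cntx x m (L1 + L2) a b = cntx x m L1 a b + cntx x (m + L1) L2 a b"
    unfolding cntx_def u by (rule card_Un_disjoint) auto
  then show ?thesis unfolding errx_def by (simp add: algebra_simps)
qed

lemma errx_triv:
  assumes "0 \<le> b - a" "b - a \<le> 1"
  shows "\<bar>errx x m L a b\<bar> \<le> L"
proof -
  have "cntx x m L a b \<le> card {m<..m+L}" unfolding cntx_def by (rule card_mono) auto
  then have c: "real (cntx x m L a b) \<le> L" by simp
  have "real L * (b - a) \<le> real L * 1" using assms by (intro mult_left_mono) auto
  moreover have "0 \<le> real L * (b - a)" using assms by simp
  ultimately have "real L * (b - a) \<le> L" "0 \<le> real L * (b - a)" by auto
  then show ?thesis unfolding errx_def using c by auto
qed

lemma blocks_t:
  fixes p :: int and q :: nat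
  assumes q: "q > 0" and cop: "coprime p (int q)" and appr: "\<bar>real q * \<beta> - p\<bar> \<le> 1 / q"
    and ab: "0 \<le> a" "a \<le> b" "b \<le> 1"
  shows "\<bar>errx (kron \<beta>) m (t * q) a b\<bar> \<le> 3 * real t"
proof (induction t arbitrary: m)
  case 0
  then show ?case by (simp add: errx_def cntx_def)
next
  case (Suc t)
  have "errx (kron \<beta>) m (Suc t * q) a b = errx (kron \<beta>) m q a b + errx (kron \<beta>) (m + q) (t * q) a b"
    using errx_add[of "kron \<beta>" m q "t*q"] by (simp add: add.commute)
  moreover have "\<bar>errx (kron \<beta>) m q a b\<bar> \<le> 3" by (rule block[OF assms])
  moreover have "\<bar>errx (kron \<beta>) (m + q) (t * q) a b\<bar> \<le> 3 * real t" by (rule Suc.IH)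
  ultimately show ?case by simp
qed

lemma dirichlet_coprime:
  fixes L :: nat
  assumes "L > 0"
  shows "\<exists>p q. 0 < q \<and> q \<le> L \<and> coprime p (int q) \<and> \<bar>real q * \<beta> - p\<bar> < 1 / L"
proof -
  have "\<exists>q0 p0. 0 < q0 \<and> q0 \<le> int (L^1) \<and> \<bar>of_int q0 * \<beta> - of_int p0\<bar> < 1 / L"
  proof (rule Dirichlet_approx_simult[OF assms, where \<theta>="\<lambda>_. \<beta>" and n=1])
    fix q :: int and p :: "nat \<Rightarrow> int" assume "0 < q" "q \<le> int (L^1)" "\<And>i. i<1 \<Longrightarrow> \<bar>of_int q * (\<lambda>_. \<beta>) i - of_int (p i)\<bar> < 1 / real L"
    then show "\<exists>q0 p0. 0 < q0 \<and> q0 \<le> int (L^1) \<and> \<bar>of_int q0 * \<beta> - of_int p0\<bar> < 1 / L" by (intro exI[of _ q] exI[of _ "p 0"]) auto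
  qed
  then obtain q0 p0 where q0: "0 < q0" "q0 \<le> int (L^1)" and ap: "\<bar>of_int q0 * \<beta> - of_int p0\<bar> < 1 / L"
    by blast
  define g where "g = gcd (p0) q0"
  have g0: "g > 0" unfolding g_def using q0 by simp
  define p where "p = p0 div g"
  define q where "q = q0 div g"
  have pe: "p0 = p * g" unfolding p_def g_def by simp
  have qe: "q0 = q * g" unfolding q_def g_def by simp
  have cop: "coprime p q" unfolding p_def q_def g_def
    by (rule div_gcd_coprime) (use q0 in auto)
  have qpos: "q > 0" using q0 g0 qe by (simp add: zero_less_mult_iff)
  have "q * 1 \<le> q * g" using g0 qpos by (intro mult_left_mono) auto
  then have qle: "q \<le> q0" using qe by simp
  have "\<bar>real_of_int q0 * \<beta> - p0\<bar> < 1 / L" using ap by blast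
  moreover have "real_of_int q0 * \<beta> - p0 = g * (real_of_int q * \<beta> - p)"
    unfolding pe qe by (simp add: algebra_simps)
  then have "\<bar>real_of_int q0 * \<beta> - p0\<bar> = g * \<bar>real_of_int q * \<beta> - p\<bar>"
    using g0 by (simp add: abs_mult)
  moreover have "\<bar>real_of_int q * \<beta> - p\<bar> \<le> g * \<bar>real_of_int q * \<beta> - p\<bar>" using g0
    by (simp add: mult_le_cancel_right1)
  ultimately have ap2: "\<bar>real_of_int q * \<beta> - p\<bar> < 1 / L" by linarith
  show ?thesis
    apply (rule exI[of _ p], rule exI[of _ "nat q"])
    using qpos qle q0 cop ap2 by auto
qed

definition good :: "real \<Rightarrow> nat \<Rightarrow> real \<Rightarrow> bool" where
  "good \<beta> M K \<longleftrightarrow> (\<forall>q\<in>{1..M}. \<forall>p::int. 1 / (K * real q) \<le> \<bar>real q * \<beta> - p\<bar>)"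

lemma seg:
  assumes gd: "good \<beta> M K" and K: "K > 0" and ab: "0 \<le> a" "a \<le> b" "b \<le> 1"
  shows "L \<ge> 1 \<Longrightarrow> L \<le> M \<Longrightarrow> \<bar>errx (kron \<beta>) m L a b\<bar> \<le> 3 * K * (log 2 L + 1)"
proof (induction L arbitrary: m rule: less_induct)
  case (less L)
  obtain p q where pq: "0 < q" "q \<le> L" "coprime p (int q)" "\<bar>real q * \<beta> - p\<bar> < 1 / L"
    using dirichlet_coprime[of L \<beta>] less.prems by auto
  have Lr: "real L > 0" using less.prems by simp
  have qr: "real q > 0" using pq by simp
  have "1 / (K * real q) \<le> \<bar>real q * \<beta> - p\<bar>" using gd pq less.prems unfolding good_def by auto
  then have "1 / (K * real q) < 1 / L" using pq by linarith
  moreover have "K * real q > 0" using qr K by simp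
  ultimately have LK: "real L < K * q" using Lr by (simp add: field_simps)
  define t where "t = L div q"
  define r where "r = L mod q"
  have Ltr: "L = t * q + r" unfolding t_def r_def by simp
  have "real t * q \<le> L" using Ltr by (metis le_add1 of_nat_le_iff of_nat_mult)
  then have "real t * q < K * q" using LK by linarith
  then have tK: "real t < K" by (rule mult_right_less_imp_less) (use qr in simp)
  have appr: "\<bar>real q * \<beta> - p\<bar> \<le> 1 / q"
  proof -
    have "1 / real L \<le> 1 / q" using pq qr by (simp add: frac_le)
    then show ?thesis using pq by linarith
  qed
  have e: "errx (kron \<beta>) m L a b = errx (kron \<beta>) m (t*q) a b + errx (kron \<beta>) (m + t*q) r a b"
    using errx_add Ltr by metis
  have b1: "\<bar>errx (kron \<beta>) m (t*q) a b\<bar> \<le> 3 * K"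
    using blocks_t[OF pq(1,3) appr ab, of m t] tK by linarith
  have lg: "log 2 L \<ge> 0" using less.prems by simp
  show ?case
  proof (cases "r = 0")
    case True
    then have "errx (kron \<beta>) m L a b = errx (kron \<beta>) m (t*q) a b" using e by (simp add: errx_def cntx_def)
    moreover have "0 \<le> 3 * K * log 2 L" using K lg by simp
    ultimately show ?thesis using b1 by (simp add: distrib_left)
  next
    case False
    have rq: "r < q" unfolding r_def using pq by simp
    have r2: "2 * r \<le> L"
    proof (cases "2 * q \<le> L")
      case True then show ?thesis using rq by simp
    next
      case False
      have "t \<noteq> 0"
      proof
        assume "t = 0"
        then show False using Ltr rq pq(2) by simp
      qed
      moreover have "t < 2"
      proof (rule ccontr)
        assume "\<not> t < 2"
        then have "2 * q \<le> t * q" by simp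
        then show False using Ltr False by linarith
      qed
      ultimately have "t = 1" by simp
      then show ?thesis using Ltr False by simp
    qed
    have IH: "\<bar>errx (kron \<beta>) (m + t*q) r a b\<bar> \<le> 3 * K * (log 2 r + 1)"
      using less.IH[of r "m + t*q"] False rq pq less.prems by simp
    have "log 2 r + 1 = log 2 (2 * r)" using False by (simp add: log_mult)
    also have "\<dots> \<le> log 2 L" using False r2 by simp
    finally have "3 * K * (log 2 r + 1) \<le> 3 * K * log 2 L" using K by simp
    moreover have "\<bar>errx (kron \<beta>) m L a b\<bar> \<le> \<bar>errx (kron \<beta>) m (t*q) a b\<bar> + \<bar>errx (kron \<beta>) (m + t*q) r a b\<bar>"
      unfolding e by (rule abs_triangle_ineq)
    moreover have "3 * K * (log 2 L + 1) = 3 * K * log 2 L + 3 * K" by (simp add: distrib_left)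
    ultimately show ?thesis using b1 IH by linarith
  qed
qed



definition T :: "nat \<Rightarrow> nat" where "T j = 2 ^ (2 ^ j)"
definition J :: "nat \<Rightarrow> nat" where "J n = (LEAST j. n < T j)"
definition G :: "nat \<Rightarrow> nat \<Rightarrow> nat" where "G d n = T (J n) ^ (d - 1)"
definition sq :: "nat \<Rightarrow> nat \<Rightarrow> nat" where "sq d n = n * G d n"

lemma T_Suc: "T (Suc j) = T j * T j"
  unfolding T_def by (simp add: power_mult[symmetric] mult.commute power_add[symmetric] mult_2)

lemma T_ge2: "T j \<ge> 2"
proof -
  have "(2::nat) ^ 1 \<le> 2 ^ (2 ^ j)" by (rule power_increasing) auto
  then show ?thesis unfolding T_def by simp
qed

lemma T_mono: "j \<le> k \<Longrightarrow> T j \<le> T k"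
  unfolding T_def by (intro power_increasing) auto

lemma T_strict: "j < k \<Longrightarrow> T j < T k"
  unfolding T_def by (intro power_strict_increasing) auto

lemma T_big: "n < T n"
proof -
  have "n < 2 ^ n" by (rule less_exp)
  also have "(2::nat) ^ n \<le> 2 ^ (2 ^ n)" by (intro power_increasing less_imp_le[OF less_exp]) auto
  finally show ?thesis unfolding T_def .
qed

lemma J_lt: "n < T (J n)"
  unfolding J_def by (rule LeastI[of _ n]) (rule T_big)

lemma J_le: "n < T j \<Longrightarrow> J n \<le> j"
  unfolding J_def by (rule Least_le)

lemma J_Suc_ge: "J n = Suc j \<Longrightarrow> T j \<le> n"
proof -
  assume a: "J n = Suc j"
  have "\<not> n < T j"
  proof
    assume "n < T j"
    then have "J n \<le> j" by (rule J_le)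
    with a show False by simp
  qed
  then show ?thesis by simp
qed

lemma J_eq: "T j \<le> n \<Longrightarrow> n < T (Suc j) \<Longrightarrow> J n = Suc j"
proof -
  assume a: "T j \<le> n" "n < T (Suc j)"
  have "J n \<le> Suc j" using a(2) by (rule J_le)
  moreover have "\<not> J n \<le> j"
  proof
    assume "J n \<le> j"
    then have "T (J n) \<le> T j" by (rule T_mono)
    with J_lt[of n] a(1) show False by simp
  qed
  ultimately show ?thesis by simp
qed

lemma J_mono: "n \<le> n' \<Longrightarrow> J n \<le> J n'"
  using J_lt[of n'] by (intro J_le) simp

lemma G_pos: "G d n \<ge> 1"
  unfolding G_def using T_ge2[of "J n"] by simp

lemma G_mono: "n \<le> n' \<Longrightarrow> G d n \<le> G d n'"
  unfolding G_def by (intro power_mono T_mono J_mono) auto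

lemma sq_step: "sq d (Suc n) \<ge> sq d n + G d n"
proof -
  have "sq d (Suc n) = Suc n * G d (Suc n)" unfolding sq_def ..
  also have "\<dots> \<ge> Suc n * G d n" by (intro mult_left_mono G_mono) auto
  finally show ?thesis unfolding sq_def by simp
qed

lemma sq_growth:
  fixes d n :: nat
  assumes d: "d \<ge> 1" and n: "n \<ge> 1"
  shows "0 < sq d n" "sq d n < sq d (Suc n)"
    "real (sq d (Suc n)) / real (sq d n) > 1 + (1/2) / (real (sq d n) powr (1 / real d))"
proof -
  define g where "g = G d n"
  define t where "t = T (J n)"
  have g1: "g \<ge> 1" unfolding g_def by (rule G_pos)
  have a: "sq d n = n * g" unfolding sq_def g_def ..
  show pos: "0 < sq d n" using a g1 n by simp
  have st: "sq d (Suc n) \<ge> sq d n + g" unfolding g_def by (rule sq_step)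
  then show "sq d n < sq d (Suc n)" using g1 by simp
  have ar: "real (sq d n) > 0" using pos by simp
  have "real (sq d (Suc n)) / real (sq d n) \<ge> (real (sq d n) + g) / real (sq d n)"
    using st ar by (intro divide_right_mono) auto
  also have "(real (sq d n) + g) / real (sq d n) = 1 + 1 / real n"
    using a g1 n by (simp add: field_simps)
  finally have r1: "real (sq d (Suc n)) / real (sq d n) \<ge> 1 + 1 / real n" .
  have nt: "n < t" unfolding t_def by (rule J_lt)
  have gt: "g = t ^ (d - 1)" unfolding g_def t_def G_def ..
  have "real n ^ d = real n * real n ^ (d - 1)" using d by (metis Suc_diff_le diff_Suc_1 power_Suc)
  also have "\<dots> \<le> real n * real t ^ (d - 1)" using nt by (intro mult_left_mono power_mono) auto
  also have "\<dots> = real (sq d n)" using a gt by simp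
  finally have nd: "real n ^ d \<le> real (sq d n)" .
  have "(real n / 2) ^ d = real n ^ d / 2 ^ d" by (simp add: power_divide)
  also have "\<dots> < real n ^ d"
  proof -
    have "(1::real) < 2 ^ d" using d by (simp add: one_less_power)
    moreover have "real n ^ d > 0" using n by simp
    ultimately show ?thesis by (simp add: divide_less_eq)
  qed
  finally have "(real n / 2) ^ d < real (sq d n)" using nd by linarith
  then have "((real n / 2) ^ d) powr (1 / real d) < real (sq d n) powr (1 / real d)"
    using d by (intro powr_less_mono2) auto
  moreover have "((real n / 2) ^ d) powr (1 / real d) = real n / 2"
  proof -
    have "((real n / 2) ^ d) powr (1 / real d) = ((real n / 2) powr real d) powr (1 / real d)"
      using n by (simp add: powr_realpow)
    also have "\<dots> = real n / 2" using n d by (simp add: powr_powr)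
    finally show ?thesis .
  qed
  ultimately have h: "real n / 2 < real (sq d n) powr (1 / real d)" by simp
  have "(1/2) / (real (sq d n) powr (1 / real d)) < (1/2) / (real n / 2)"
    using h n ar by (intro divide_strict_left_mono) auto
  also have "(1/2) / (real n / 2) = 1 / real n" by simp
  finally show "real (sq d (Suc n)) / real (sq d n) > 1 + (1/2) / (real (sq d n) powr (1 / real d))"
    using r1 by linarith
qed


definition Kc :: "nat \<Rightarrow> real" where "Kc i = 2 ^ i * (real i + 1) ^ 2"
definition beta :: "nat \<Rightarrow> real \<Rightarrow> nat \<Rightarrow> real" where "beta d \<alpha> i = real (T i ^ (d - 1)) * \<alpha>"
definition xs :: "nat \<Rightarrow> real \<Rightarrow> nat \<Rightarrow> real" where "xs d \<alpha> n = frac (real (sq d n) * \<alpha>)"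
definition Bnd :: "nat \<Rightarrow> real \<Rightarrow> nat \<Rightarrow> nat \<Rightarrow> real" where
  "Bnd d \<alpha> i N = (if good (beta d \<alpha> i) (T i) (Kc i) then 3 * Kc i * (log 2 (real N) + 1) else real (T i))"

lemma Kc_pos: "Kc i > 0" unfolding Kc_def by simp

lemma Kc_mono: "i \<le> j \<Longrightarrow> Kc i \<le> Kc j"
  unfolding Kc_def by (intro mult_mono power_increasing power_mono) auto

lemma xs_kron: "J n = j \<Longrightarrow> xs d \<alpha> n = kron (beta d \<alpha> j) n"
  unfolding xs_def kron_def beta_def sq_def G_def by (simp add: mult.assoc)

lemma errx_window:
  assumes "\<And>n. n \<in> {m<..m+L} \<Longrightarrow> J n = j"
  shows "errx (xs d \<alpha>) m L a b = errx (kron (beta d \<alpha> j)) m L a b"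
proof -
  have "{n \<in> {m<..m+L}. xs d \<alpha> n \<in> {a..<b}} = {n \<in> {m<..m+L}. kron (beta d \<alpha> j) n \<in> {a..<b}}"
    using assms xs_kron by auto
  then show ?thesis unfolding errx_def cntx_def by simp
qed

lemma Bnd_nonneg: "1 \<le> N \<Longrightarrow> Bnd d \<alpha> i N \<ge> 0"
  unfolding Bnd_def using Kc_pos[of i] by auto

lemma Bnd_mono: "1 \<le> N \<Longrightarrow> N \<le> N' \<Longrightarrow> Bnd d \<alpha> i N \<le> Bnd d \<alpha> i N'"
  unfolding Bnd_def using Kc_pos[of i] by (auto intro!: mult_left_mono)

lemma total:
  assumes ab: "0 \<le> a" "a \<le> b" "b \<le> 1"
  shows "1 \<le> N \<Longrightarrow> N < T j \<Longrightarrow> \<bar>errx (xs d \<alpha>) 0 N a b\<bar> \<le> (\<Sum>i\<le>j. Bnd d \<alpha> i N)"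
proof (induction j arbitrary: N)
  case 0
  then have N1: "N = 1" unfolding T_def by simp
  have "\<bar>errx (xs d \<alpha>) 0 N a b\<bar> \<le> real N" by (rule errx_triv) (use ab in auto)
  moreover have "Bnd d \<alpha> 0 N \<ge> 1" unfolding Bnd_def Kc_def T_def N1 by simp
  ultimately show ?case using N1 by simp
next
  case (Suc j)
  show ?case
  proof (cases "N < T j")
    case True
    have "\<bar>errx (xs d \<alpha>) 0 N a b\<bar> \<le> (\<Sum>i\<le>j. Bnd d \<alpha> i N)" using Suc.IH[OF Suc.prems(1) True] .
    moreover have "Bnd d \<alpha> (Suc j) N \<ge> 0" using Suc.prems by (intro Bnd_nonneg) auto
    ultimately show ?thesis by simp
  next
    case False
    define N0 where "N0 = T j - 1"
    define L where "L = N - N0"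
    have tj: "T j \<ge> 2" by (rule T_ge2)
    have N0: "1 \<le> N0" "N0 < T j" unfolding N0_def using tj by auto
    have NL: "N = N0 + L" "L \<ge> 1" "L \<le> N" unfolding L_def N0_def using False tj by auto
    have e: "errx (xs d \<alpha>) 0 N a b = errx (xs d \<alpha>) 0 N0 a b + errx (xs d \<alpha>) N0 L a b"
      using errx_add[of "xs d \<alpha>" 0 N0 L] NL by simp
    have h1: "\<bar>errx (xs d \<alpha>) 0 N0 a b\<bar> \<le> (\<Sum>i\<le>j. Bnd d \<alpha> i N)"
    proof -
      have "\<bar>errx (xs d \<alpha>) 0 N0 a b\<bar> \<le> (\<Sum>i\<le>j. Bnd d \<alpha> i N0)" using Suc.IH[OF N0] .
      also have "\<dots> \<le> (\<Sum>i\<le>j. Bnd d \<alpha> i N)"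
        using N0 NL by (intro sum_mono Bnd_mono) auto
      finally show ?thesis .
    qed
    have win: "\<And>n. n \<in> {N0<..N0+L} \<Longrightarrow> J n = Suc j"
      using Suc.prems(2) NL N0_def tj by (intro J_eq) auto
    have h2: "\<bar>errx (xs d \<alpha>) N0 L a b\<bar> \<le> Bnd d \<alpha> (Suc j) N"
    proof (cases "good (beta d \<alpha> (Suc j)) (T (Suc j)) (Kc (Suc j))")
      case True
      have "\<bar>errx (kron (beta d \<alpha> (Suc j))) N0 L a b\<bar> \<le> 3 * Kc (Suc j) * (log 2 L + 1)"
        using NL Suc.prems by (intro seg[OF True Kc_pos ab]) auto
      also have "\<dots> \<le> 3 * Kc (Suc j) * (log 2 N + 1)"
        using NL Kc_pos[of "Suc j"] by (intro mult_left_mono) auto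
      moreover have "errx (xs d \<alpha>) N0 L a b = errx (kron (beta d \<alpha> (Suc j))) N0 L a b"
        by (rule errx_window[OF win])
      ultimately show ?thesis unfolding Bnd_def using True by simp
    next
      case False
      have "\<bar>errx (xs d \<alpha>) N0 L a b\<bar> \<le> real L" by (rule errx_triv) (use ab in auto)
      also have "\<dots> \<le> real (T (Suc j))" using NL Suc.prems by simp
      finally show ?thesis unfolding Bnd_def using False by simp
    qed
    have "\<bar>errx (xs d \<alpha>) 0 N a b\<bar> \<le> \<bar>errx (xs d \<alpha>) 0 N0 a b\<bar> + \<bar>errx (xs d \<alpha>) N0 L a b\<bar>"
      unfolding e by (rule abs_triangle_ineq)
    then show ?thesis using h1 h2 by simp
  qed
qed



lemma final_bound:
  assumes gI: "\<forall>i\<ge>I. good (beta d \<alpha> i) (T i) (Kc i)" and ab: "0 \<le> a" "a \<le> b" "b \<le> 1" and N: "N \<ge> 2"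
  shows "\<bar>errx (xs d \<alpha>) 0 N a b\<bar> \<le> (\<Sum>i<I. real (T i)) + 6 * (log 2 (log 2 N) + 2)^3 * log 2 N * (log 2 N + 1)"
proof -
  define j where "j = J N"
  define lg where "lg = log 2 (real N)"
  have Nj: "N < T j" unfolding j_def by (rule J_lt)
  have "j \<noteq> 0"
  proof
    assume "j = 0" then show False using Nj N by (simp add: T_def)
  qed
  then obtain j' where jj: "j = Suc j'" by (cases j) auto
  have Tj': "T j' \<le> N" using jj unfolding j_def by (rule J_Suc_ge)
  have lg2: "real (2 ^ j') \<le> lg"
  proof -
    have "log 2 (real (T j')) \<le> lg" unfolding lg_def using Tj' T_ge2[of j'] by simp
    moreover have "log 2 (real (T j')) = real (2 ^ j')" unfolding T_def by simp
    ultimately show ?thesis by simp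
  qed
  have "real (2 ^ j') \<ge> (1::real)" by simp
  then have lg1: "lg \<ge> 1" using lg2 by linarith
  have tot: "\<bar>errx (xs d \<alpha>) 0 N a b\<bar> \<le> (\<Sum>i\<le>j. Bnd d \<alpha> i N)"
    using N Nj by (intro total[OF ab]) auto
  define f where "f i = (if i < I then real (T i) else 0)" for i
  have bi: "Bnd d \<alpha> i N \<le> f i + 3 * Kc i * (lg + 1)" for i
  proof (cases "good (beta d \<alpha> i) (T i) (Kc i)")
    case True
    have "f i \<ge> 0" unfolding f_def by simp
    then show ?thesis unfolding Bnd_def lg_def using True by simp
  next
    case False
    then have "i < I" using gI by (meson not_le)
    moreover have "0 \<le> 3 * Kc i * (lg + 1)" using Kc_pos[of i] lg1 by simp
    ultimately show ?thesis unfolding Bnd_def f_def using False by simp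
  qed
  have s1: "(\<Sum>i\<le>j. f i) \<le> (\<Sum>i<I. real (T i))"
  proof -
    have "(\<Sum>i\<le>j. f i) = (\<Sum>i\<in>{..j} \<inter> {..<I}. real (T i))"
      unfolding f_def by (simp add: sum.inter_restrict)
    also have "\<dots> \<le> (\<Sum>i<I. real (T i))" by (rule sum_mono2) auto
    finally show ?thesis .
  qed
  have s2: "(\<Sum>i\<le>j. 3 * Kc i * (lg + 1)) \<le> (\<Sum>i\<le>j. 3 * Kc j * (lg + 1))"
    using lg1 by (intro sum_mono mult_right_mono) (auto intro: Kc_mono)
  have s3: "(\<Sum>i\<le>j. 3 * Kc j * (lg + 1)) = 3 * ((real j + 1)^3 * 2^j) * (lg + 1)"
    unfolding Kc_def by (simp add: power3_eq_cube power2_eq_square algebra_simps)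
  have pj: "(2::real)^j \<le> 2 * lg" using lg2 unfolding jj by simp
  have jl: "real j + 1 \<le> log 2 lg + 2"
  proof -
    have "real j' = log 2 (real (2 ^ j'))" by simp
    also have "\<dots> \<le> log 2 lg" using lg2 lg1 by (intro log_le_cancel_iff[THEN iffD2]) auto
    finally show ?thesis unfolding jj by simp
  qed
  have "3 * ((real j + 1)^3 * 2^j) * (lg + 1) \<le> 3 * ((log 2 lg + 2)^3 * (2 * lg)) * (lg + 1)"
  proof -
    have "(real j + 1)^3 \<le> (log 2 lg + 2)^3" using jl by (intro power_mono) auto
    moreover have "log 2 lg \<ge> 0" using lg1 by simp
    ultimately have "(real j + 1)^3 * 2^j \<le> (log 2 lg + 2)^3 * (2 * lg)"
      using pj by (intro mult_mono) auto
    then show ?thesis using lg1 by (intro mult_right_mono mult_left_mono) auto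
  qed
  have "(\<Sum>i\<le>j. Bnd d \<alpha> i N) \<le> (\<Sum>i\<le>j. f i + 3 * Kc i * (lg + 1))"
    by (intro sum_mono bi)
  also have "\<dots> = (\<Sum>i\<le>j. f i) + (\<Sum>i\<le>j. 3 * Kc i * (lg + 1))" by (rule sum.distrib)
  finally have s0: "(\<Sum>i\<le>j. Bnd d \<alpha> i N) \<le> (\<Sum>i\<le>j. f i) + (\<Sum>i\<le>j. 3 * Kc i * (lg + 1))" .
  have eq: "3 * ((log 2 lg + 2)^3 * (2 * lg)) * (lg + 1) = 6 * (log 2 lg + 2)^3 * lg * (lg + 1)" by simp
  have "\<bar>errx (xs d \<alpha>) 0 N a b\<bar> \<le> (\<Sum>i<I. real (T i)) + 6 * (log 2 lg + 2)^3 * lg * (lg + 1)"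
    using tot s0 s1 s2 s3 eq \<open>3 * ((real j + 1)^3 * 2^j) * (lg + 1) \<le> _\<close> by linarith
  then show ?thesis unfolding lg_def .
qed

lemma disc_bound:
  assumes N: "N \<ge> 1" and B: "\<And>a b. 0 \<le> a \<Longrightarrow> a < b \<Longrightarrow> b \<le> 1 \<Longrightarrow> \<bar>errx x 0 N a b\<bar> \<le> B"
  shows "\<bar>real N * discrepancy x N\<bar> \<le> B"
proof -
  define S where "S = {(a, b). 0 \<le> a \<and> a < b \<and> b \<le> (1::real)}"
  define v where "v ab = \<bar>real (card {n \<in> {1..N}. x n \<in> {fst ab..<snd ab}}) / real N - (snd ab - fst ab)\<bar>" for ab
  have Nr: "real N > 0" using N by simp
  have dd: "discrepancy x N = (SUP ab\<in>S. v ab)" unfolding discrepancy_def S_def v_def ..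
  have vb: "v ab \<le> B / N" if "ab \<in> S" for ab
  proof -
    obtain a b where ab: "ab = (a, b)" "0 \<le> a" "a < b" "b \<le> 1" using \<open>ab \<in> S\<close> unfolding S_def by auto
    have e: "{n \<in> {1..N}. x n \<in> {a..<b}} = {n \<in> {0<..0+N}. x n \<in> {a..<b}}" by auto
    have "v ab = \<bar>errx x 0 N a b\<bar> / N"
    proof -
      have "real (card {n \<in> {1..N}. x n \<in> {a..<b}}) / N - (b - a) = (real (card {n \<in> {1..N}. x n \<in> {a..<b}}) - N * (b - a)) / N"
        using Nr by (simp add: diff_divide_distrib)
      then show ?thesis unfolding v_def ab errx_def cntx_def e[symmetric] using Nr by simp
    qed
    also have "\<dots> \<le> B / N" using B[OF ab(2-4)] Nr by (intro divide_right_mono) auto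
    finally show ?thesis .
  qed
  have "(0,1) \<in> S" unfolding S_def by simp
  then have ne: "S \<noteq> {}" by blast
  have le: "discrepancy x N \<le> B / N" unfolding dd by (rule cSUP_least[OF ne vb])
  have "(0,1) \<in> S" unfolding S_def by simp
  then have "v (0,1) \<le> discrepancy x N" unfolding dd
    by (intro cSUP_upper) (auto intro!: bdd_aboveI2[where M="B/N"] vb)
  moreover have "v (0,1) \<ge> 0" unfolding v_def by simp
  ultimately have "0 \<le> discrepancy x N" by linarith
  then have "\<bar>real N * discrepancy x N\<bar> = real N * discrepancy x N" by simp
  also have "\<dots> \<le> real N * (B / N)" using le Nr by (intro mult_left_mono) auto
  also have "\<dots> = B" using Nr by simp
  finally show ?thesis .
qed



definition badset :: "nat \<Rightarrow> int \<Rightarrow> nat \<Rightarrow> real set" where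
  "badset d m i = {\<alpha> \<in> {real_of_int m..real_of_int m + 1}. \<not> good (beta d \<alpha> i) (T i) (Kc i)}"

lemma badset_alt: "badset d m i = {\<alpha>. real_of_int m \<le> \<alpha> \<and> \<alpha> \<le> real_of_int m + 1 \<and>
   (\<exists>q\<in>{1..T i}. \<exists>p::int. \<bar>real q * (real (T i ^ (d-1)) * \<alpha>) - real_of_int p\<bar> < 1 / (Kc i * real q))}"
  by (auto simp: badset_def good_def beta_def not_le)

lemma badset_meas: "badset d m i \<in> sets lborel"
  unfolding badset_alt by measurable

lemma Kc_ge1: "Kc i \<ge> 1"
proof -
  have "(1::real) \<le> 2 ^ i" by simp
  moreover have "(1::real) \<le> (real i + 1) ^ 2" by simp
  ultimately show ?thesis unfolding Kc_def by (metis mult_mono mult_1 zero_le_one order_trans)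
qed

lemma harm_T: "(harm (T i) :: real) \<le> 2 * 2 ^ i"
proof -
  have "harm (T i) - ln (real (T i)) \<le> harm 1 - ln (real (1::nat))"
    using T_ge2[of i] by (intro euler_mascheroni_sequence_decreasing) auto
  then have h: "harm (T i) \<le> ln (real (T i)) + 1" by (simp add: harm_def)
  have "ln (real (T i)) = 2 ^ i * ln 2" unfolding T_def by (simp add: ln_realpow)
  also have "\<dots> \<le> 2 ^ i * 1" using ln_2_less_1 by (intro mult_left_mono) auto
  finally have "ln (real (T i)) \<le> 2 ^ i" by simp
  moreover have "(1::real) \<le> 2 ^ i" by simp
  ultimately show ?thesis using h by linarith
qed

definition Qf :: "nat \<Rightarrow> nat \<Rightarrow> nat \<Rightarrow> int" where "Qf d i q = int (q * T i ^ (d - 1))"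
definition etaf :: "nat \<Rightarrow> nat \<Rightarrow> real" where "etaf i q = 1 / (Kc i * real q)"
definition Ivl :: "nat \<Rightarrow> nat \<Rightarrow> nat \<times> int \<Rightarrow> real set" where
  "Ivl d i qp = {(real_of_int (snd qp) - etaf i (fst qp)) / Qf d i (fst qp) <..< (real_of_int (snd qp) + etaf i (fst qp)) / Qf d i (fst qp)}"
definition Sg :: "nat \<Rightarrow> nat \<Rightarrow> int \<Rightarrow> (nat \<times> int) set" where
  "Sg d i m = (SIGMA q:{1..T i}. {Qf d i q * m .. Qf d i q * m + Qf d i q})"

lemma badset_sub: "badset d m i \<subseteq> (\<Union>qp\<in>Sg d i m. Ivl d i qp)"
proof
  fix \<alpha> assume "\<alpha> \<in> badset d m i"
  then obtain q p where a: "real_of_int m \<le> \<alpha>" "\<alpha> \<le> real_of_int m + 1" and q: "q \<in> {1..T i}"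
    and qp: "\<bar>real q * (real (T i ^ (d-1)) * \<alpha>) - real_of_int p\<bar> < 1 / (Kc i * real q)"
    unfolding badset_alt by blast
  have Qr: "real_of_int (Qf d i q) = real q * real (T i ^ (d-1))" unfolding Qf_def by simp
  have t1: "(1::real) \<le> real (T i) ^ (d-1)" using T_ge2[of i] by (intro one_le_power) simp
  have q1: "(1::real) \<le> real q" using q by simp
  have Qpos: "real_of_int (Qf d i q) \<ge> 1" unfolding Qr using mult_mono[OF q1 t1] by simp
  have e1: "\<bar>real_of_int (Qf d i q) * \<alpha> - p\<bar> < etaf i q" using qp unfolding Qr etaf_def by (simp add: mult.assoc)
  have "Kc i * real q \<ge> 1 * 1" using Kc_ge1[of i] q1 by (intro mult_mono) auto
  then have e2: "etaf i q \<le> 1" unfolding etaf_def by simp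
  have h1: "real_of_int (Qf d i q) * real_of_int m \<le> real_of_int (Qf d i q) * \<alpha>" using a Qpos by (intro mult_left_mono) auto
  have h2: "real_of_int (Qf d i q) * \<alpha> \<le> real_of_int (Qf d i q) * (real_of_int m + 1)" using a Qpos by (intro mult_left_mono) auto
  have "real_of_int (Qf d i q * m) - 1 < real_of_int p" using e1 e2 h1 by (simp add: abs_less_iff)
  then have p1: "Qf d i q * m \<le> p" by linarith
  have "real_of_int p < real_of_int (Qf d i q * m + Qf d i q) + 1" using e1 e2 h2 by (simp add: abs_less_iff algebra_simps)
  then have p2: "p \<le> Qf d i q * m + Qf d i q" by linarith
  have "real_of_int p - etaf i q < real_of_int (Qf d i q) * \<alpha>" "real_of_int (Qf d i q) * \<alpha> < real_of_int p + etaf i q"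
    using e1 by (auto simp: abs_less_iff)
  then have "(real_of_int p - etaf i q) / Qf d i q < \<alpha>" "\<alpha> < (real_of_int p + etaf i q) / Qf d i q"
    using Qpos by (auto simp: pos_divide_less_eq pos_less_divide_eq mult.commute)
  moreover have "(q, p) \<in> Sg d i m" unfolding Sg_def using q p1 p2 by auto
  ultimately show "\<alpha> \<in> (\<Union>qp\<in>Sg d i m. Ivl d i qp)"
    by (intro UN_I[of "(q,p)"]) (auto simp: Ivl_def)
qed


lemma Qf_ge1: "q \<ge> 1 \<Longrightarrow> real_of_int (Qf d i q) \<ge> 1"
proof -
  assume q: "q \<ge> 1"
  have t1: "(1::real) \<le> real (T i) ^ (d-1)" using T_ge2[of i] by (intro one_le_power) simp
  have q1: "(1::real) \<le> real q" using q by simp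
  show ?thesis unfolding Qf_def using mult_mono[OF q1 t1] by simp
qed

lemma etaf_pos: "q \<ge> 1 \<Longrightarrow> etaf i q > 0"
  unfolding etaf_def using Kc_pos[of i] by simp

lemma sum_per_q:
  assumes q: "q \<ge> 1"
  shows "(\<Sum>p\<in>{Qf d i q * m .. Qf d i q * m + Qf d i q}. 2 * etaf i q / Qf d i q) \<le> 4 * etaf i q"
proof -
  define Q where "Q = Qf d i q"
  have Q1: "real_of_int Q \<ge> 1" unfolding Q_def using Qf_ge1[OF q] .
  have c: "card {Q * m .. Q * m + Q} = nat (Q + 1)" by simp
  have "(\<Sum>p\<in>{Q * m .. Q * m + Q}. 2 * etaf i q / Q) = real (nat (Q + 1)) * (2 * etaf i q / Q)"
    using c by simp
  also have "real (nat (Q + 1)) = real_of_int Q + 1" using Q1 by simp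
  also have "(real_of_int Q + 1) * (2 * etaf i q / Q) = 2 * etaf i q * ((Q + 1) / Q)" by (simp add: field_simps)
  also have "\<dots> \<le> 2 * etaf i q * 2"
  proof -
    have "(real_of_int Q + 1) / Q \<le> 2" using Q1 by (simp add: divide_le_eq)
    then show ?thesis using etaf_pos[OF q, of i] by (intro mult_left_mono) auto
  qed
  finally show ?thesis unfolding Q_def by simp
qed

lemma badset_measure: "emeasure lborel (badset d m i) \<le> ennreal (8 / (real i + 1)^2)"
proof -
  have fin: "finite (Sg d i m)" unfolding Sg_def by auto
  have Ivl_sets: "Ivl d i qp \<in> sets lborel" for qp unfolding Ivl_def by simp
  have Ivl_meas: "emeasure lborel (Ivl d i qp) = ennreal (2 * etaf i (fst qp) / Qf d i (fst qp))"
    if "qp \<in> Sg d i m" for qp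
  proof -
    have q1: "fst qp \<ge> 1" using that unfolding Sg_def by auto
    have Q1: "real_of_int (Qf d i (fst qp)) \<ge> 1" using Qf_ge1[OF q1] .
    have e0: "etaf i (fst qp) > 0" using etaf_pos[OF q1] .
    have le: "(real_of_int (snd qp) - etaf i (fst qp)) / Qf d i (fst qp) \<le> (real_of_int (snd qp) + etaf i (fst qp)) / Qf d i (fst qp)"
      using Q1 e0 by (intro divide_right_mono) auto
    have "(real_of_int (snd qp) + etaf i (fst qp)) / Qf d i (fst qp) - (real_of_int (snd qp) - etaf i (fst qp)) / Qf d i (fst qp)
          = 2 * etaf i (fst qp) / Qf d i (fst qp)" by (simp add: diff_divide_distrib[symmetric])
    then show ?thesis unfolding Ivl_def using emeasure_lborel_Ioo[OF le] by simp
  qed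
  have nn: "0 \<le> 2 * etaf i (fst qp) / Qf d i (fst qp)" if "qp \<in> Sg d i m" for qp
  proof -
    have q1: "fst qp \<ge> 1" using that unfolding Sg_def by auto
    show ?thesis using Qf_ge1[OF q1, of d i] etaf_pos[OF q1, of i] by simp
  qed
  have "emeasure lborel (badset d m i) \<le> emeasure lborel (\<Union>qp\<in>Sg d i m. Ivl d i qp)"
    using fin Ivl_sets by (intro emeasure_mono badset_sub) auto
  also have "\<dots> \<le> (\<Sum>qp\<in>Sg d i m. emeasure lborel (Ivl d i qp))"
    using fin Ivl_sets by (intro emeasure_subadditive_finite) auto
  also have "\<dots> = (\<Sum>qp\<in>Sg d i m. ennreal (2 * etaf i (fst qp) / Qf d i (fst qp)))"
    using Ivl_meas by (rule sum.cong[OF refl])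
  also have "\<dots> = ennreal (\<Sum>qp\<in>Sg d i m. 2 * etaf i (fst qp) / Qf d i (fst qp))"
    using nn by (rule sum_ennreal)
  also have "\<dots> \<le> ennreal (8 / (real i + 1)^2)"
  proof (rule ennreal_leI)
    have "(\<Sum>qp\<in>Sg d i m. 2 * etaf i (fst qp) / Qf d i (fst qp))
        = (\<Sum>q\<in>{1..T i}. \<Sum>p\<in>{Qf d i q * m .. Qf d i q * m + Qf d i q}. 2 * etaf i q / Qf d i q)"
      unfolding Sg_def by (subst sum.Sigma) (auto simp: case_prod_beta)
    also have "\<dots> \<le> (\<Sum>q\<in>{1..T i}. 4 * etaf i q)"
      by (intro sum_mono sum_per_q) auto
    also have "\<dots> = 4 / Kc i * harm (T i)"
      unfolding etaf_def harm_def by (simp add: sum_distrib_left field_simps)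
    also have "\<dots> \<le> 4 / Kc i * (2 * 2 ^ i)"
      using harm_T[of i] Kc_pos[of i] by (intro mult_left_mono) auto
    also have "\<dots> = 8 / (real i + 1)^2" unfolding Kc_def by (simp add: field_simps)
    finally show "(\<Sum>qp\<in>Sg d i m. 2 * etaf i (fst qp) / Qf d i (fst qp)) \<le> 8 / (real i + 1)^2" .
  qed
  finally show ?thesis .
qed

lemma summable_inv_sq: "summable (\<lambda>i::nat. 8 / (real i + 1)^2)"
proof -
  have "summable (\<lambda>n::nat. inverse (real n ^ 2))" by (rule inverse_power_summable) simp
  then have "summable (\<lambda>n::nat. inverse (real (Suc n) ^ 2))" by (subst summable_Suc_iff)
  then have "summable (\<lambda>n::nat. 8 * inverse (real (Suc n) ^ 2))" by (rule summable_mult)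
  then show ?thesis by (simp add: field_simps)
qed

lemma AE_good: "AE \<alpha> in lborel. \<exists>I. \<forall>i\<ge>I. good (beta d \<alpha> i) (T i) (Kc i)"
proof -
  have m: "AE \<alpha> in lborel. \<alpha> \<in> {real_of_int m..real_of_int m + 1} \<longrightarrow> (\<exists>I. \<forall>i\<ge>I. good (beta d \<alpha> i) (T i) (Kc i))" for m :: int
  proof -
    have meas: "\<And>i. badset d m i \<in> sets lborel" by (rule badset_meas)
    have mle: "measure lborel (badset d m i) \<le> 8 / (real i + 1)^2" for i
    proof -
      have "measure lborel (badset d m i) = enn2real (emeasure lborel (badset d m i))" by (simp add: measure_def)
      also have "\<dots> \<le> enn2real (ennreal (8 / (real i + 1)^2))" by (intro enn2real_mono badset_measure) auto
      also have "\<dots> = 8 / (real i + 1)^2" by simp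
      finally show ?thesis .
    qed
    have fin: "\<And>i. emeasure lborel (badset d m i) < \<infinity>"
      using badset_measure by (rule le_less_trans) simp
    have sm: "summable (\<lambda>i. measure lborel (badset d m i))"
      by (rule summable_comparison_test'[OF summable_inv_sq, of 0]) (use mle in auto)
    have "AE \<alpha> in lborel. eventually (\<lambda>i. \<alpha> \<in> space lborel - badset d m i) sequentially"
      by (rule borel_cantelli_AE1[OF meas fin sm])
    then show ?thesis
    proof (rule AE_mp[OF _ AE_I2], intro impI)
      fix \<alpha> assume ev: "eventually (\<lambda>i. \<alpha> \<in> space lborel - badset d m i) sequentially"
        and a: "\<alpha> \<in> {real_of_int m..real_of_int m + 1}"
      from ev obtain I where "\<forall>i\<ge>I. \<alpha> \<in> space lborel - badset d m i" by (auto simp: eventually_sequentially)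
      then have "\<forall>i\<ge>I. good (beta d \<alpha> i) (T i) (Kc i)" using a unfolding badset_def by auto
      then show "\<exists>I. \<forall>i\<ge>I. good (beta d \<alpha> i) (T i) (Kc i)" by blast
    qed
  qed
  have "AE \<alpha> in lborel. \<forall>m::int. \<alpha> \<in> {real_of_int m..real_of_int m + 1} \<longrightarrow> (\<exists>I. \<forall>i\<ge>I. good (beta d \<alpha> i) (T i) (Kc i))"
    using m by (subst AE_all_countable) auto
  then show ?thesis
  proof (rule AE_mp[OF _ AE_I2], intro impI)
    fix \<alpha> assume h: "\<forall>m::int. \<alpha> \<in> {real_of_int m..real_of_int m + 1} \<longrightarrow> (\<exists>I. \<forall>i\<ge>I. good (beta d \<alpha> i) (T i) (Kc i))"
    have "\<alpha> \<in> {real_of_int \<lfloor>\<alpha>\<rfloor>..real_of_int \<lfloor>\<alpha>\<rfloor> + 1}" by auto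
    then show "\<exists>I. \<forall>i\<ge>I. good (beta d \<alpha> i) (T i) (Kc i)" using h by blast
  qed
qed



lemma H_bigo:
  fixes C :: real and \<epsilon> :: real
  assumes "\<epsilon> > 0"
  shows "(\<lambda>N::nat. C + 6 * (log 2 (log 2 (real N)) + 2)^3 * log 2 (real N) * (log 2 (real N) + 1)) \<in> O(\<lambda>N. ln (real N) powr (2 + \<epsilon>))"
  using assms by real_asymp

theorem theorem5:
  fixes d :: nat
  assumes "d \<ge> 1"
  shows "\<exists>(a :: nat \<Rightarrow> nat) (c :: real).
           (\<forall>n\<ge>1. 0 < a n \<and> a n < a (Suc n)) \<and> c > 0 \<and>
           (\<forall>n\<ge>1. real (a (Suc n)) / real (a n) > 1 + c / (real (a n) powr (1 / real d))) \<and>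
           (AE \<alpha> in lborel. \<forall>\<epsilon>>0.
              (\<lambda>N. real N * discrepancy (\<lambda>n. frac (real (a n) * \<alpha>)) N)
                \<in> O(\<lambda>N. ln (real N) powr (2 + \<epsilon>)))"
proof (intro exI[of _ "sq d"] exI[of _ "1/2::real"] conjI)
  show "\<forall>n\<ge>1. 0 < sq d n \<and> sq d n < sq d (Suc n)" using sq_growth(1,2)[OF assms] by blast
  show "(0::real) < 1/2" by simp
  show "\<forall>n\<ge>1. real (sq d (Suc n)) / real (sq d n) > 1 + (1/2) / (real (sq d n) powr (1 / real d))"
    using sq_growth(3)[OF assms] by blast
  show "AE \<alpha> in lborel. \<forall>\<epsilon>>0.
              (\<lambda>N. real N * discrepancy (\<lambda>n. frac (real (sq d n) * \<alpha>)) N)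
                \<in> O(\<lambda>N. ln (real N) powr (2 + \<epsilon>))"
  proof (rule AE_mp[OF AE_good[of d] AE_I2], intro impI allI)
    fix \<alpha> :: real and \<epsilon> :: real
    assume "\<exists>I. \<forall>i\<ge>I. good (beta d \<alpha> i) (T i) (Kc i)" and e: "\<epsilon> > 0"
    then obtain I where gI: "\<forall>i\<ge>I. good (beta d \<alpha> i) (T i) (Kc i)" by blast
    define C where "C = (\<Sum>i<I. real (T i))"
    define H where "H N = C + 6 * (log 2 (log 2 (real N)) + 2)^3 * log 2 (real N) * (log 2 (real N) + 1)" for N :: nat
    have xe: "(\<lambda>n. frac (real (sq d n) * \<alpha>)) = xs d \<alpha>" by (rule ext) (simp add: xs_def)
    have b: "\<bar>real N * discrepancy (xs d \<alpha>) N\<bar> \<le> H N" if N: "N \<ge> 2" for N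
    proof (rule disc_bound)
      show "1 \<le> N" using N by simp
      fix a b :: real assume "0 \<le> a" "a < b" "b \<le> 1"
      then show "\<bar>errx (xs d \<alpha>) 0 N a b\<bar> \<le> H N"
        unfolding H_def C_def using final_bound[OF gI _ _ _ N, of a b] by simp
    qed
    have "(\<lambda>N. real N * discrepancy (xs d \<alpha>) N) \<in> O(H)"
    proof (rule bigoI[where c=1])
      show "eventually (\<lambda>N. norm (real N * discrepancy (xs d \<alpha>) N) \<le> 1 * norm (H N)) at_top"
        using b by (intro eventually_mono[OF eventually_ge_at_top[of 2]]) fastforce
    qed
    also have "H \<in> O(\<lambda>N. ln (real N) powr (2 + \<epsilon>))" unfolding H_def by (rule H_bigo[OF e])
    finally show "(\<lambda>N. real N * discrepancy (\<lambda>n. frac (real (sq d n) * \<alpha>)) N) \<in> O(\<lambda>N. ln (real N) powr (2 + \<epsilon>))"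
      unfolding xe .
  qed
qed


end
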